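(* Let $G$ be a connected (finite, simple) graph, $\mathcal{F}$ a maximum induced forest of $G$, $S=V(G)\setminus V(\mathcal{F})$, $H$ the contracted graph, and $B$ a skeleton of $H$ with the maximum possible number of 2-edges among all skeletons (all as defined in the context). Let $L_S$ be the set of vertices of $S$ that are leaves of $B$ and let $B_1=B[V(B)\setminus L_S]$ (the inner skeleton). Then every leaf of $B_1$ is a tree vertex.
   Context: A maximum induced forest of $G$ is an induced forest of $G$ with the maximum number of vertices. Let $\mathcal{T}$ be the set of connected components (trees) of $\mathcal{F}$ and $S=V(G)\setminus V(\mathcal{F})$. The graph $H$ has vertex set $\{x_T : T\in\mathcal{T}\}\cup S$ (the $x_T$ are called tree vertices, the vertices of $S$ non-tree vertices) and edge set consisting of all edges of $G[S]$ together with all pairs $ux_T$ with $u\in S$, $T\in\mathcal{T}$ such that $u$ has at least one neighbor in $V(T)$ in $G$. An edge $ux_T$ of $H$ is a 2-edge if $u$ has at least two neighbors in $V(T)$ in $G$; all other edges of $H$ (including all edges with both endpoints in $S$) are 1-edges. A skeleton is a spanning tree of $H$ rooted at some tree vertex, with all edges directed towards the root (an in-arborescence). A leaf is a vertex of total degree 1. *)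

theory Defs
  imports Main
begin

definition simple_graph :: "'v set \<Rightarrow> 'v set set \<Rightarrow> bool" where
  "simple_graph V E \<longleftrightarrow> finite V \<and> (\<forall>e\<in>E. e \<subseteq> V \<and> card e = 2)"

definition reach :: "'v set set \<Rightarrow> 'v \<Rightarrow> 'v \<Rightarrow> bool" where
  "reach E = (\<lambda>x y. {x, y} \<in> E)\<^sup>*\<^sup>*"

definition connected_graph :: "'v set \<Rightarrow> 'v set set \<Rightarrow> bool" where
  "connected_graph V E \<longleftrightarrow> (\<forall>u\<in>V. \<forall>v\<in>V. reach E u v)"

definition is_cycle :: "'v set \<Rightarrow> 'v set set \<Rightarrow> 'v list \<Rightarrow> bool" where
  "is_cycle V E xs \<longleftrightarrow> length xs \<ge> 3 \<and> distinct xs \<and> set xs \<subseteq> V \<and>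
     (\<forall>i. Suc i < length xs \<longrightarrow> {xs ! i, xs ! Suc i} \<in> E) \<and> {last xs, hd xs} \<in> E"

definition acyclic_graph :: "'v set \<Rightarrow> 'v set set \<Rightarrow> bool" where
  "acyclic_graph V E \<longleftrightarrow> (\<nexists>xs. is_cycle V E xs)"

definition is_tree_graph :: "'v set \<Rightarrow> 'v set set \<Rightarrow> bool" where
  "is_tree_graph V E \<longleftrightarrow> simple_graph V E \<and> V \<noteq> {} \<and> connected_graph V E \<and> acyclic_graph V E"

definition induced_edges :: "'v set set \<Rightarrow> 'v set \<Rightarrow> 'v set set" where
  "induced_edges E X = {e \<in> E. e \<subseteq> X}"

definition induced_forest :: "'v set \<Rightarrow> 'v set set \<Rightarrow> 'v set \<Rightarrow> bool" where
  "induced_forest V E F \<longleftrightarrow> F \<subseteq> V \<and> acyclic_graph F (induced_edges E F)"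

definition max_induced_forest :: "'v set \<Rightarrow> 'v set set \<Rightarrow> 'v set \<Rightarrow> bool" where
  "max_induced_forest V E F \<longleftrightarrow> induced_forest V E F \<and>
     (\<forall>F'. induced_forest V E F' \<longrightarrow> card F' \<le> card F)"

definition components :: "'v set set \<Rightarrow> 'v set \<Rightarrow> 'v set set" where
  "components E F = {{y. reach (induced_edges E F) x y} | x. x \<in> F}"

text \<open>The contracted graph H: tree vertices are Inl T (T the vertex set of a tree of F),
  non-tree vertices are Inr u with u in S = V - F.\<close>
definition H_verts :: "'v set \<Rightarrow> 'v set set \<Rightarrow> 'v set \<Rightarrow> ('v set + 'v) set" where
  "H_verts V E F = Inl ` components E F \<union> Inr ` (V - F)"

definition H_edges :: "'v set \<Rightarrow> 'v set set \<Rightarrow> 'v set \<Rightarrow> ('v set + 'v) set set" where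
  "H_edges V E F =
     {{Inr u, Inr v} | u v. u \<in> V - F \<and> v \<in> V - F \<and> {u, v} \<in> E} \<union>
     {{Inr u, Inl T} | u T. u \<in> V - F \<and> T \<in> components E F \<and> (\<exists>w\<in>T. {u, w} \<in> E)}"

definition two_edge :: "'v set \<Rightarrow> 'v set set \<Rightarrow> 'v set \<Rightarrow> ('v set + 'v) set \<Rightarrow> bool" where
  "two_edge V E F e \<longleftrightarrow> (\<exists>u T. e = {Inr u, Inl T} \<and> u \<in> V - F \<and> T \<in> components E F \<and>
       2 \<le> card {w \<in> T. {u, w} \<in> E})"

text \<open>A skeleton: a spanning tree B (edge set) of H, rooted at a tree vertex r; edges are
  oriented towards r (the orientation is determined by B and r).\<close>
definition skeleton :: "'v set \<Rightarrow> 'v set set \<Rightarrow> 'v set \<Rightarrow> ('v set + 'v) \<Rightarrow> ('v set + 'v) set set \<Rightarrow> bool" where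
  "skeleton V E F r B \<longleftrightarrow> B \<subseteq> H_edges V E F \<and> is_tree_graph (H_verts V E F) B \<and>
     r \<in> Inl ` components E F"

definition num_two_edges :: "'v set \<Rightarrow> 'v set set \<Rightarrow> 'v set \<Rightarrow> ('v set + 'v) set set \<Rightarrow> nat" where
  "num_two_edges V E F B = card {e \<in> B. two_edge V E F e}"

definition degree :: "'w set set \<Rightarrow> 'w \<Rightarrow> nat" where
  "degree B v = card {e \<in> B. v \<in> e}"

definition is_leaf :: "'w set \<Rightarrow> 'w set set \<Rightarrow> 'w \<Rightarrow> bool" where
  "is_leaf W B v \<longleftrightarrow> v \<in> W \<and> degree B v = 1"

end

theory Submission
  imports Defs
begin

lemma cycle_rotate1:
  assumes c: "is_cycle V E xs" shows "is_cycle V E (rotate1 xs)"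
proof -
  from c have len: "length xs \<ge> 3" and d: "distinct xs" and s: "set xs \<subseteq> V"
    and adj: "\<And>i. Suc i < length xs \<Longrightarrow> {xs ! i, xs ! Suc i} \<in> E"
    and lh: "{last xs, hd xs} \<in> E" unfolding is_cycle_def by auto
  obtain a zs where xs: "xs = a # zs" using len by (cases xs) auto
  have lz: "length zs \<ge> 2" using len xs by simp
  have r: "rotate1 xs = zs @ [a]" using xs by simp
  have "{(zs @ [a]) ! i, (zs @ [a]) ! Suc i} \<in> E" if i: "Suc i < length (zs @ [a])" for i
  proof (cases "Suc i < length zs")
    case True
    then have "{xs ! Suc i, xs ! Suc (Suc i)} \<in> E" using adj[of "Suc i"] xs by simp
    then show ?thesis using True xs by (simp add: nth_append)
  next
    case False
    then have si: "Suc i = length zs" using i by simp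
    have "(zs @ [a]) ! i = last zs" using si
      by (metis Suc_lessI append_butlast_last_id diff_Suc_1 le_zero_eq length_append_singleton
          length_butlast lessI lz nat.simps(3) nth_append_length numeral_2_eq_2 list.size(3) nth_append)
    moreover have "last zs = last xs" using xs lz by auto
    moreover have "(zs @ [a]) ! Suc i = a" using si by simp
    ultimately show ?thesis using lh xs by simp
  qed
  moreover have "{last (zs @ [a]), hd (zs @ [a])} \<in> E"
  proof -
    have "hd (zs @ [a]) = xs ! 1" using xs lz by (cases zs) auto
    moreover have "{xs ! 0, xs ! 1} \<in> E" using adj[of 0] len by simp
    ultimately show ?thesis using xs by (simp add: insert_commute)
  qed
  ultimately show ?thesis unfolding is_cycle_def r using len d s xs by auto
qed

lemma cycle_rotate: "is_cycle V E xs \<Longrightarrow> is_cycle V E (rotate n xs)"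
  by (induction n) (auto intro: cycle_rotate1)

lemma cycle_to_head:
  assumes "is_cycle V E xs" "v \<in> set xs"
  shows "\<exists>ys. is_cycle V E ys \<and> hd ys = v \<and> set ys = set xs"
proof -
  obtain ps qs where xs: "xs = ps @ v # qs" using assms(2) by (metis split_list)
  have "rotate (length ps) xs = v # qs @ ps" using xs by (simp add: rotate_append)
  moreover have "is_cycle V E (rotate (length ps) xs)" using assms(1) cycle_rotate by blast
  ultimately show ?thesis using xs by (metis list.sel(1) set_rotate)
qed

lemma reach_sym: "reach E a b \<Longrightarrow> reach E b a"
  unfolding reach_def
proof (induction rule: rtranclp_induct)
  case base then show ?case by simp
next
  case (step y z)
  then have "{z, y} \<in> E" by (simp add: insert_commute)
  then show ?case using step(3) by (metis converse_rtranclp_into_rtranclp)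
qed

lemma reach_trans: "reach E a b \<Longrightarrow> reach E b c \<Longrightarrow> reach E a c"
  unfolding reach_def by simp

lemma reach_edge: "{a, b} \<in> E \<Longrightarrow> reach E a b"
  unfolding reach_def by auto

lemma reach_mono: "E1 \<subseteq> E2 \<Longrightarrow> reach E1 a b \<Longrightarrow> reach E2 a b"
  unfolding reach_def by (metis (no_types, lifting) mono_rtranclp subsetD)


lemma reach_avoid:
  assumes only: "\<forall>e\<in>B. y \<in> e \<longrightarrow> e = {x, y}" and xy: "x \<noteq> y"
  shows "reach B a b \<Longrightarrow> a \<noteq> y \<Longrightarrow>
    (b = y \<and> reach (B - {{x, y}}) a x) \<or> (b \<noteq> y \<and> reach (B - {{x, y}}) a b)"
  unfolding reach_def
proof (induction rule: rtranclp_induct)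
  case base then show ?case by simp
next
  case (step b c)
  have bc: "{b, c} \<in> B" using step(2) .
  show ?case
  proof (cases "b = y")
    case True
    then have "reach (B - {{x, y}}) a x" using step unfolding reach_def by auto
    moreover have "c = x" using only bc True xy by (metis doubleton_eq_iff insertI1)
    ultimately show ?thesis using xy unfolding reach_def by auto
  next
    case False
    then have rb: "(\<lambda>u v. {u, v} \<in> B - {{x, y}})\<^sup>*\<^sup>* a b" using step by auto
    show ?thesis
    proof (cases "c = y")
      case True
      then have "b = x" using only bc False xy by (metis doubleton_eq_iff insertI1 insert_commute)
      then show ?thesis using True rb by auto
    next
      case False
      then have "{b, c} \<in> B - {{x, y}}" using bc \<open>b \<noteq> y\<close> by auto
      then show ?thesis using rb False by (meson rtranclp.rtrancl_into_rtrancl)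
    qed
  qed
qed

lemma leaf_swap:
  assumes tr: "is_tree_graph W B" and xy: "{x, y} \<in> B" and xny: "x \<noteq> y"
    and only: "\<forall>e\<in>B. y \<in> e \<longrightarrow> e = {x, y}" and tW: "t \<in> W" and ty: "t \<noteq> y"
  shows "is_tree_graph W (insert {y, t} (B - {{x, y}}))"
proof -
  define B0 where "B0 = B - {{x, y}}"
  define B' where "B' = insert {y, t} B0"
  have sg: "simple_graph W B" and ne: "W \<noteq> {}" and con: "connected_graph W B"
    and ac: "acyclic_graph W B" using tr unfolding is_tree_graph_def by auto
  have fW: "finite W" and eW: "\<And>e. e \<in> B \<Longrightarrow> e \<subseteq> W \<and> card e = 2"
    using sg unfolding simple_graph_def by auto
  have yW: "y \<in> W" using eW[OF xy] by auto
  have sg': "simple_graph W B'"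
    unfolding simple_graph_def B'_def B0_def using fW eW yW tW ty by auto
  have B0B': "B0 \<subseteq> B'" unfolding B'_def by auto
  have yt: "reach B' y t" unfolding B'_def by (rule reach_edge) simp
  have nn: "reach B' a b" if "a \<in> W" "b \<in> W" "a \<noteq> y" "b \<noteq> y" for a b
  proof -
    have "reach B a b" using con that unfolding connected_graph_def by auto
    then have "reach B0 a b" using reach_avoid[OF only xny] that unfolding B0_def by blast
    then show ?thesis using reach_mono[OF B0B'] by blast
  qed
  have ny: "reach B' y b" if "b \<in> W" for b
  proof (cases "b = y")
    case True then show ?thesis unfolding reach_def by simp
  next
    case False then show ?thesis using reach_trans[OF yt nn[OF tW that ty False]] by simp
  qed
  have con': "connected_graph W B'" unfolding connected_graph_def
  proof (intro ballI)
    fix a b assume a: "a \<in> W" and b: "b \<in> W"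
    show "reach B' a b"
    proof (cases "a = y")
      case True then show ?thesis using ny b by simp
    next
      case False
      show ?thesis
      proof (cases "b = y")
        case True then show ?thesis using reach_sym[OF ny[OF a]] by simp
      next
        case False then show ?thesis using nn[OF a b \<open>a \<noteq> y\<close> False] by simp
      qed
    qed
  qed
  have yedge: "e = {y, t}" if "e \<in> B'" "y \<in> e" for e
    using that only unfolding B'_def B0_def by auto
  have ac': "acyclic_graph W B'" unfolding acyclic_graph_def
  proof
    assume "\<exists>xs. is_cycle W B' xs"
    then obtain xs where c: "is_cycle W B' xs" by blast
    show False
    proof (cases "y \<in> set xs")
      case False
      have inB: "e \<in> B" if "e \<in> B'" "e \<subseteq> set xs" for e
        using that False unfolding B'_def B0_def by auto
      have "is_cycle W B xs"
        using c unfolding is_cycle_def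
      proof (intro conjI allI impI)
        fix i assume "Suc i < length xs" and cc: "length xs \<ge> 3 \<and> distinct xs \<and> set xs \<subseteq> W \<and>
          (\<forall>i. Suc i < length xs \<longrightarrow> {xs ! i, xs ! Suc i} \<in> B') \<and> {last xs, hd xs} \<in> B'"
        then show "{xs ! i, xs ! Suc i} \<in> B" using inB by (simp add: nth_mem)
      next
        assume cc: "length xs \<ge> 3 \<and> distinct xs \<and> set xs \<subseteq> W \<and>
          (\<forall>i. Suc i < length xs \<longrightarrow> {xs ! i, xs ! Suc i} \<in> B') \<and> {last xs, hd xs} \<in> B'"
        then have "xs \<noteq> []" by auto
        then show "{last xs, hd xs} \<in> B" using inB cc by simp
      qed auto
      then show False using ac unfolding acyclic_graph_def by blast
    next
      case True
      then obtain ys where c2: "is_cycle W B' ys" and hy: "hd ys = y"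
        using cycle_to_head[OF c] by blast
      have len: "length ys \<ge> 3" and d: "distinct ys"
        and adj: "\<And>i. Suc i < length ys \<Longrightarrow> {ys ! i, ys ! Suc i} \<in> B'"
        and lh: "{last ys, hd ys} \<in> B'" using c2 unfolding is_cycle_def by auto
      have "ys \<noteq> []" using len by auto
      then have y0: "ys ! 0 = y" using hy by (simp add: hd_conv_nth)
      have "{ys ! 0, ys ! 1} = {y, t}" using adj[of 0] len y0 yedge by simp
      moreover have "ys ! 1 \<noteq> ys ! 0" using len by (subst nth_eq_iff_index_eq[OF d]) auto
      then have "ys ! 1 \<noteq> y" using y0 by simp
      ultimately have y1: "ys ! 1 = t" by (metis doubleton_eq_iff)
      have ll: "last ys = ys ! (length ys - 1)" using \<open>ys \<noteq> []\<close> by (simp add: last_conv_nth)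
      have "{last ys, y} = {y, t}" using lh hy yedge by simp
      moreover have "ys ! (length ys - 1) \<noteq> ys ! 0" using len by (subst nth_eq_iff_index_eq[OF d]) auto
      then have "last ys \<noteq> y" using y0 ll by simp
      ultimately have "last ys = t" by (metis doubleton_eq_iff)
      then have "ys ! 1 = ys ! (length ys - 1)" using y1 ll by simp
      then have "1 = length ys - 1" using len nth_eq_iff_index_eq[OF d, of 1 "length ys - 1"] by simp
      then show False using len by simp
    qed
  qed
  show ?thesis unfolding is_tree_graph_def B'_def[symmetric] B0_def[symmetric]
    using sg' ne con' ac' B'_def by auto
qed


lemma reach_in_F:
  "reach (induced_edges E F) a z \<Longrightarrow> a \<in> F \<Longrightarrow> z \<in> F"
  unfolding reach_def
proof (induction rule: rtranclp_induct)
  case base then show ?case by simp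
next
  case (step y z) then show ?case unfolding induced_edges_def by auto
qed

lemma forest_two:
  assumes sg: "simple_graph V E" and mf: "max_induced_forest V E F"
    and wV: "w \<in> V" and wF: "w \<notin> F"
  shows "\<exists>T\<in>components E F. (\<exists>a\<in>T. {w, a} \<in> E) \<and> 2 \<le> card {z\<in>T. {w, z} \<in> E}"
proof -
  have FV: "F \<subseteq> V" and acF: "acyclic_graph F (induced_edges E F)"
    and mx: "\<And>F'. induced_forest V E F' \<Longrightarrow> card F' \<le> card F"
    using mf unfolding max_induced_forest_def induced_forest_def by auto
  have fF: "finite F" using FV sg unfolding simple_graph_def by (meson finite_subset)
  have "card (insert w F) = Suc (card F)" using fF wF by simp
  then have "\<not> induced_forest V E (insert w F)" using mx by fastforce
  then have "\<not> acyclic_graph (insert w F) (induced_edges E (insert w F))"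
    using FV wV unfolding induced_forest_def by auto
  then obtain xs where c: "is_cycle (insert w F) (induced_edges E (insert w F)) xs"
    unfolding acyclic_graph_def by blast
  have wxs: "w \<in> set xs"
  proof (rule ccontr)
    assume nw: "w \<notin> set xs"
    have len: "length xs \<ge> 3" and d: "distinct xs" and s: "set xs \<subseteq> insert w F"
      and adj: "\<And>i. Suc i < length xs \<Longrightarrow> {xs ! i, xs ! Suc i} \<in> induced_edges E (insert w F)"
      and lh: "{last xs, hd xs} \<in> induced_edges E (insert w F)" using c unfolding is_cycle_def by auto
    have sF: "set xs \<subseteq> F" using s nw by auto
    have ne: "xs \<noteq> []" using len by auto
    have "is_cycle F (induced_edges E F) xs" unfolding is_cycle_def
    proof (intro conjI allI impI)
      fix i assume i: "Suc i < length xs"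
      have "xs ! i \<in> F" "xs ! Suc i \<in> F" using i sF by (auto simp: nth_mem subset_iff)
      then show "{xs ! i, xs ! Suc i} \<in> induced_edges E F" using adj[OF i] unfolding induced_edges_def by auto
    next
      have "last xs \<in> F" "hd xs \<in> F" using ne sF by auto
      then show "{last xs, hd xs} \<in> induced_edges E F" using lh unfolding induced_edges_def by auto
    qed (use len d sF in auto)
    then show False using acF unfolding acyclic_graph_def by blast
  qed
  obtain ys where c2: "is_cycle (insert w F) (induced_edges E (insert w F)) ys" and hy: "hd ys = w"
    using cycle_to_head[OF c wxs] by blast
  have len: "length ys \<ge> 3" and d: "distinct ys" and s: "set ys \<subseteq> insert w F"
    and adj: "\<And>i. Suc i < length ys \<Longrightarrow> {ys ! i, ys ! Suc i} \<in> induced_edges E (insert w F)"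
    and lh: "{last ys, hd ys} \<in> induced_edges E (insert w F)" using c2 unfolding is_cycle_def by auto
  have ne: "ys \<noteq> []" using len by auto
  have y0: "ys ! 0 = w" using hy ne by (simp add: hd_conv_nth)
  have ll: "last ys = ys ! (length ys - 1)" using ne by (simp add: last_conv_nth)
  have inF: "ys ! i \<in> F" if "0 < i" "i < length ys" for i
  proof -
    have "ys ! i \<noteq> ys ! 0" using that by (subst nth_eq_iff_index_eq[OF d]) auto
    moreover have "ys ! i \<in> insert w F" using that s by (auto simp: nth_mem subset_iff)
    ultimately show ?thesis using y0 by auto
  qed
  define a where "a = ys ! 1"
  define b where "b = ys ! (length ys - 1)"
  have aF: "a \<in> F" unfolding a_def using inF len by auto
  have path: "reach (induced_edges E F) a (ys ! i)" if "0 < i" "i < length ys" for i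
    using that
  proof (induction i)
    case 0 then show ?case by simp
  next
    case (Suc i)
    show ?case
    proof (cases "i = 0")
      case True then show ?thesis unfolding a_def reach_def by simp
    next
      case False
      then have IH: "reach (induced_edges E F) a (ys ! i)" using Suc by auto
      have "{ys ! i, ys ! Suc i} \<in> induced_edges E (insert w F)" using adj Suc.prems by auto
      moreover have "ys ! i \<in> F" "ys ! Suc i \<in> F" using inF False Suc.prems by auto
      ultimately have "{ys ! i, ys ! Suc i} \<in> induced_edges E F" unfolding induced_edges_def by auto
      then have "reach (induced_edges E F) (ys ! i) (ys ! Suc i)" by (rule reach_edge)
      from reach_trans[OF IH this] show ?thesis .
    qed
  qed
  define T where "T = {z. reach (induced_edges E F) a z}"
  have Tc: "T \<in> components E F" unfolding T_def components_def using aF by auto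
  have TF: "T \<subseteq> F"
  proof
    fix z assume "z \<in> T" then show "z \<in> F" using reach_in_F[OF _ aF] unfolding T_def by blast
  qed
  have aT: "a \<in> T" unfolding T_def reach_def by simp
  have bT: "b \<in> T" unfolding T_def b_def using path len by auto
  have ab: "a \<noteq> b" unfolding a_def b_def using len by (subst nth_eq_iff_index_eq[OF d]) auto
  have wa: "{w, a} \<in> E" using adj[of 0] len y0 unfolding a_def induced_edges_def by auto
  have wb: "{w, b} \<in> E" using lh hy ll unfolding b_def induced_edges_def by (auto simp: insert_commute)
  have "{a, b} \<subseteq> {z\<in>T. {w, z} \<in> E}" using aT bT wa wb by auto
  moreover have "finite {z\<in>T. {w, z} \<in> E}" by (rule finite_subset[of _ F]) (use TF fF in auto)
  ultimately have "card {a, b} \<le> card {z\<in>T. {w, z} \<in> E}" by (rule card_mono[rotated])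
  then have "2 \<le> card {z\<in>T. {w, z} \<in> E}" using ab by simp
  then show ?thesis using Tc aT wa by blast
qed


theorem corollary3:
  fixes V :: "'v set" and E :: "'v set set" and F :: "'v set"
    and r :: "'v set + 'v" and B :: "('v set + 'v) set set"
  assumes "simple_graph V E" and "connected_graph V E"
    and "max_induced_forest V E F"
    and "skeleton V E F r B"
    and "\<forall>r' B'. skeleton V E F r' B' \<longrightarrow> num_two_edges V E F B' \<le> num_two_edges V E F B"
  shows "\<forall>x. is_leaf (H_verts V E F - {Inr u | u. u \<in> V - F \<and> is_leaf (H_verts V E F) B (Inr u)})
               (induced_edges B (H_verts V E F - {Inr u | u. u \<in> V - F \<and> is_leaf (H_verts V E F) B (Inr u)})) x
             \<longrightarrow> x \<in> Inl ` components E F"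
proof (intro allI impI)
  fix x
  define HV where "HV = H_verts V E F"
  define LS :: "('v set + 'v) set" where "LS = {Inr u | u. u \<in> V - F \<and> is_leaf HV B (Inr u)}"
  define W where "W = HV - LS"
  assume "is_leaf (H_verts V E F - {Inr u | u. u \<in> V - F \<and> is_leaf (H_verts V E F) B (Inr u)})
               (induced_edges B (H_verts V E F - {Inr u | u. u \<in> V - F \<and> is_leaf (H_verts V E F) B (Inr u)})) x"
  then have lf: "is_leaf W (induced_edges B W) x" unfolding W_def LS_def HV_def .
  show "x \<in> Inl ` components E F"
  proof (rule ccontr)
    assume nx: "x \<notin> Inl ` components E F"
    have xW: "x \<in> W" and dW: "card {e \<in> induced_edges B W. x \<in> e} = 1"
      using lf unfolding is_leaf_def degree_def by auto
    have xHV: "x \<in> HV" using xW unfolding W_def by auto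
    then obtain u where xu: "x = Inr u" and uVF: "u \<in> V - F"
      using nx unfolding HV_def H_verts_def by auto
    have "x \<notin> LS" using xW unfolding W_def by auto
    then have "\<not> is_leaf HV B x" using xu uVF unfolding LS_def by auto
    then have dB: "card {e \<in> B. x \<in> e} \<noteq> 1" using xHV unfolding is_leaf_def degree_def by auto
    have BH: "B \<subseteq> H_edges V E F" and tr: "is_tree_graph HV B" and rI: "r \<in> Inl ` components E F"
      using assms(4) unfolding skeleton_def HV_def by auto
    have fHV: "finite HV" and eHV: "\<And>e. e \<in> B \<Longrightarrow> e \<subseteq> HV \<and> card e = 2"
      using tr unfolding is_tree_graph_def simple_graph_def by auto
    obtain e where eB: "e \<in> B" and xe: "x \<in> e" and eW: "\<not> e \<subseteq> W"
    proof -
      have False if "\<forall>e\<in>B. x \<in> e \<longrightarrow> e \<subseteq> W"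
      proof -
        have "{e \<in> induced_edges B W. x \<in> e} = {e \<in> B. x \<in> e}"
          using that unfolding induced_edges_def by auto
        then show False using dW dB by simp
      qed
      then show ?thesis using that by blast
    qed
    obtain y where ye: "y \<in> e" and yW: "y \<notin> W" using eW by blast
    have yHV: "y \<in> HV" using eHV[OF eB] ye by auto
    then have "y \<in> LS" using yW unfolding W_def by auto
    then obtain w where yw: "y = Inr w" and wVF: "w \<in> V - F" and ylf: "is_leaf HV B (Inr w)"
      unfolding LS_def by auto
    have xy: "x \<noteq> y" using xW yW by auto
    have exy: "e = {x, y}"
    proof -
      obtain a b where "e = {a, b}" "a \<noteq> b" using eHV[OF eB] by (meson card_2_iff)
      then show ?thesis using xe ye xy by auto
    qed
    have xyB: "{x, y} \<in> B" using eB exy by simp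
    have only: "\<forall>e'\<in>B. y \<in> e' \<longrightarrow> e' = {x, y}"
    proof -
      have "card {e \<in> B. y \<in> e} = 1" using ylf yw unfolding is_leaf_def degree_def by simp
      then obtain f where f: "{e \<in> B. y \<in> e} = {f}" by (meson card_1_singletonE)
      have "{x, y} \<in> {e \<in> B. y \<in> e}" using xyB by simp
      then have "f = {x, y}" using f by simp
      then show ?thesis using f by blast
    qed
    obtain T where Tc: "T \<in> components E F" and wa: "\<exists>a\<in>T. {w, a} \<in> E"
      and two: "2 \<le> card {z\<in>T. {w, z} \<in> E}"
      using forest_two[OF assms(1) assms(3)] wVF by blast
    define t :: "'v set + 'v" where "t = Inl T"
    have tHV: "t \<in> HV" unfolding t_def HV_def H_verts_def using Tc by auto
    have ty: "t \<noteq> y" unfolding t_def yw by simp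
    define B' where "B' = insert {y, t} (B - {{x, y}})"
    have tr': "is_tree_graph HV B'" unfolding B'_def
      by (rule leaf_swap[OF tr xyB xy only tHV ty])
    have ytH: "{y, t} \<in> H_edges V E F"
      unfolding H_edges_def yw t_def using wVF Tc wa by blast
    have BH': "B' \<subseteq> H_edges V E F" unfolding B'_def using BH ytH by auto
    have sk': "skeleton V E F r B'" unfolding skeleton_def HV_def[symmetric] using BH' tr' rI by simp
    then have le: "num_two_edges V E F B' \<le> num_two_edges V E F B" using assms(5) by blast
    have nte: "\<not> two_edge V E F {x, y}" unfolding two_edge_def xu yw by (auto simp: doubleton_eq_iff)
    have te: "two_edge V E F {y, t}" unfolding two_edge_def yw t_def using wVF Tc two by blast
    have ytB: "{y, t} \<notin> B"
    proof
      assume "{y, t} \<in> B"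
      then have "{y, t} = {x, y}" using only by auto
      then have "t = x" using ty by (auto simp: doubleton_eq_iff)
      then show False unfolding t_def xu by simp
    qed
    have fB: "finite B"
    proof (rule finite_subset[of _ "Pow HV"])
      show "B \<subseteq> Pow HV" using eHV by auto
    qed (use fHV in simp)
    have "{e \<in> B'. two_edge V E F e} = insert {y, t} {e \<in> B. two_edge V E F e}"
      unfolding B'_def using te nte by auto
    then have "num_two_edges V E F B' = Suc (num_two_edges V E F B)"
      unfolding num_two_edges_def using ytB fB by simp
    then show False using le by simp
  qed
qed

end
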